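(* In the depth-3 instance with the shadow distribution described below, for $m$ sufficiently large, for every event $\mathcal E$ of the form $\{e_1\in A\}$ or $\{e_1\notin A\}$ with $e_1\in E$ and $\mathbb P[\mathcal E]>0$, and for every vertex $v$, we have $\mathbb E[|\delta^+(v)\cap A|\mid\mathcal E]\ge\Omega(1/m^4)\cdot\mathbb E[|\delta^+(v)\cap A'|\mid\mathcal E]$, where $|\delta^+(v)\cap A'|$ counts edges of $\delta^+(v)$ with their multiplicity in $A'$.
   Context: Depth-3 instance: fix a small constant $\rho>0$ and a large integer $m$ with $\rho m\in\mathbb N$, ground set $[m]$. Layers: $L_0=\{s\}$; $L_1$ has one vertex $u$ for each $S_u\subseteq[m]$ with $|S_u|=\rho m$; $L_2$ one vertex for each subset of size $2\rho m$; $L_3$ (the sinks) one vertex for each subset of size $\rho m$. Edges: $s$ to every vertex of $L_1$; $(u,v)$, $u\in L_1,v\in L_2$, iff $S_u\subseteq S_v$; $(u,v)$, $u\in L_2,v\in L_3$, iff $S_v\subseteq S_u$. For $e=(u,v)$ write $S_e=S_v$ and $e\in L_i$ if $v\in L_i$; $D(e)$ is the set of edges $(a,b)$ with $a$ reachable (possibly trivially) from the endpoint of $e$. $x_e=\binom{(1-\rho)m}{\rho m}^{-1}$ for $e\in L_1\cup L_3$ and $x_e=\binom{(1-\rho)m}{\rho m}^{-1}\binom{2\rho m}{\rho m}^{-1}$ for $e\in L_2$. Subtree solutions: for $e\in L_1$, $x^{(e)}_{e'}=1$ if $e'=e$; $\binom{2\rho m}{\rho m}^{-1}$ if $e'\in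 L_2\cap D(e)$; $\frac{\binom{(1-\rho)m}{\rho m}}{\binom{m}{\rho m}}\binom{m-2\rho m+|S_{e'}\cap S_e|}{|S_{e'}\cap S_e|}^{-1}$ if $e'\in L_3\cap D(e)$; $0$ otherwise. For $e\in L_2$: $x^{(e)}_{e'}=1$ if $e'=e$ or $e'\in L_3\cap D(e)$, else $0$. For $e\in L_3$: $x^{(e)}_{e'}=1$ iff $e'=e$. Shadow distribution: random $S$ containing each edge $e$ independently with probability $x_e$; for each $e\in S$ independently a random $S_e$ containing each edge $e'$ independently with probability $x^{(e)}_{e'}$; $A=\bigcup_{e\in S}S_e$, and $A'$ is the multiset union of the $S_e$, $e\in S$ (an edge appears in $A'$ as many times as the number of $e\in S$ with that edge in $S_e$). *)

theory Defs
  imports "HOL-Probability.Probability" "HOL-Probability.Product_PMF"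
begin

text \<open>Depth-3 instance. Parameters: m (ground set {0..<m}) and k = rho*m.
Vertices: the source Src, and Lay i S for layer i in {1,2,3} with S the attached subset.\<close>

datatype vtx = Src | Lay nat "nat set"

type_synonym edge = "vtx \<times> vtx"

definition verts :: "nat \<Rightarrow> nat \<Rightarrow> vtx set" where
  "verts m k = {Src}
     \<union> {Lay 1 S | S. S \<subseteq> {..<m} \<and> card S = k}
     \<union> {Lay 2 S | S. S \<subseteq> {..<m} \<and> card S = 2 * k}
     \<union> {Lay 3 S | S. S \<subseteq> {..<m} \<and> card S = k}"

definition edges :: "nat \<Rightarrow> nat \<Rightarrow> edge set" where
  "edges m k =
       {(Src, Lay 1 S) | S. S \<subseteq> {..<m} \<and> card S = k}
     \<union> {(Lay 1 S, Lay 2 T) | S T. S \<subseteq> {..<m} \<and> card S = k \<and> T \<subseteq> {..<m} \<and> card T = 2 * k \<and> S \<subseteq> T}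
     \<union> {(Lay 2 T, Lay 3 S) | S T. S \<subseteq> {..<m} \<and> card S = k \<and> T \<subseteq> {..<m} \<and> card T = 2 * k \<and> S \<subseteq> T}"

fun vlayer :: "vtx \<Rightarrow> nat" where
  "vlayer Src = 0" | "vlayer (Lay i S) = i"

fun vset :: "vtx \<Rightarrow> nat set" where
  "vset Src = {}" | "vset (Lay i S) = S"

definition elayer :: "edge \<Rightarrow> nat" where "elayer e = vlayer (snd e)"
definition eset :: "edge \<Rightarrow> nat set" where "eset e = vset (snd e)"

definition Desc :: "nat \<Rightarrow> nat \<Rightarrow> edge \<Rightarrow> edge set" where
  "Desc m k e = {e' \<in> edges m k. (snd e, fst e') \<in> (edges m k)\<^sup>*}"

definition outE :: "nat \<Rightarrow> nat \<Rightarrow> vtx \<Rightarrow> edge set" where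
  "outE m k v = {e \<in> edges m k. fst e = v}"

text \<open>N = binom((1-rho)m, rho m) = binom(m-k, k).\<close>
definition Nb :: "nat \<Rightarrow> nat \<Rightarrow> real" where
  "Nb m k = real ((m - k) choose k)"

definition xval :: "nat \<Rightarrow> nat \<Rightarrow> edge \<Rightarrow> real" where
  "xval m k e = (if elayer e = 2 then 1 / (Nb m k * real ((2 * k) choose k)) else 1 / Nb m k)"

definition xsub :: "nat \<Rightarrow> nat \<Rightarrow> edge \<Rightarrow> edge \<Rightarrow> real" where
  "xsub m k e e' =
    (if elayer e = 1 then
       (if e' = e then 1
        else if e' \<in> Desc m k e \<and> elayer e' = 2 then 1 / real ((2 * k) choose k)
        else if e' \<in> Desc m k e \<and> elayer e' = 3 then
          (Nb m k / real (m choose k)) /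
            real ((m - 2 * k + card (eset e' \<inter> eset e)) choose card (eset e' \<inter> eset e))
        else 0)
     else if elayer e = 2 then
       (if e' = e \<or> (e' \<in> Desc m k e \<and> elayer e' = 3) then 1 else 0)
     else (if e' = e then 1 else 0))"

definition rand_subset :: "'a set \<Rightarrow> ('a \<Rightarrow> real) \<Rightarrow> 'a set pmf" where
  "rand_subset X p = map_pmf (\<lambda>f. {x \<in> X. f x}) (Pi_pmf X False (\<lambda>x. bernoulli_pmf (p x)))"

text \<open>Shadow distribution: outcome (S, (S_e)_{e in S}); S_e = {} for e outside S (dummy).\<close>
definition shadow :: "nat \<Rightarrow> nat \<Rightarrow> (edge set \<times> (edge \<Rightarrow> edge set)) pmf" where
  "shadow m k =
     rand_subset (edges m k) (xval m k) \<bind> (\<lambda>S.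
     Pi_pmf S {} (\<lambda>e. rand_subset (edges m k) (xsub m k e)) \<bind> (\<lambda>g.
     return_pmf (S, g)))"

text \<open>A = union of the S_e, e in S;  multiplicity of e' in the multiset union A'.\<close>
definition setA :: "edge set \<times> (edge \<Rightarrow> edge set) \<Rightarrow> edge set" where
  "setA \<omega> = (\<Union>e\<in>fst \<omega>. snd \<omega> e)"

definition multA' :: "edge set \<times> (edge \<Rightarrow> edge set) \<Rightarrow> edge \<Rightarrow> nat" where
  "multA' \<omega> e' = card {e \<in> fst \<omega>. e' \<in> snd \<omega> e}"

end

theory Submission
  imports Defs
begin


lemma prod_one_minus_bound:
  fixes t :: "'i \<Rightarrow> real"
  assumes "finite I" "\<And>i. i \<in> I \<Longrightarrow> 0 \<le> t i \<and> t i \<le> 1"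
  shows "(1 + sum t I) * (\<Prod>i\<in>I. 1 - t i) \<le> 1"
  using assms
proof (induction I rule: finite_induct)
  case empty then show ?case by simp
next
  case (insert x F)
  have IH: "(1 + sum t F) * (\<Prod>i\<in>F. 1 - t i) \<le> 1" using insert by auto
  have tx: "0 \<le> t x" "t x \<le> 1" using insert by auto
  have T0: "0 \<le> sum t F" using insert by (auto intro: sum_nonneg)
  have P0: "0 \<le> (\<Prod>i\<in>F. 1 - t i)" using insert by (auto intro: prod_nonneg)
  have "(1 + (t x + sum t F)) * (1 - t x) \<le> 1 + sum t F"
    using tx T0 by (simp add: algebra_simps)
  then have "(1 + (t x + sum t F)) * (1 - t x) * (\<Prod>i\<in>F. 1 - t i) \<le> (1 + sum t F) * (\<Prod>i\<in>F. 1 - t i)"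
    using P0 by (rule mult_right_mono)
  then show ?case using insert IH by (simp add: mult.assoc)
qed

lemma prod_one_minus_bound':
  fixes t :: "'i \<Rightarrow> real"
  assumes "finite I" "\<And>i. i \<in> I \<Longrightarrow> 0 \<le> t i \<and> t i \<le> 1"
  shows "sum t I \<le> (1 + sum t I) * (1 - (\<Prod>i\<in>I. 1 - t i))"
  using prod_one_minus_bound[OF assms] by (simp add: algebra_simps)



lemma pmf_diff: "B \<subseteq> A \<Longrightarrow> measure_pmf.prob p (A - B) = measure_pmf.prob p A - measure_pmf.prob p B"
  by (rule measure_pmf.finite_measure_Diff) auto

lemma pmf_union_disj: "A \<inter> B = {} \<Longrightarrow> measure_pmf.prob p (A \<union> B) = measure_pmf.prob p A + measure_pmf.prob p B"
  by (rule measure_pmf.finite_measure_Union) auto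

lemma pmf_compl: "measure_pmf.prob p (UNIV - A) = 1 - measure_pmf.prob p A"
  using measure_pmf.prob_compl[of A p] by simp

lemma prodP:
  assumes "finite X"
  shows "measure_pmf.prob (Pi_pmf X d D) {F. \<forall>j\<in>X. F j \<in> B j} = (\<Prod>j\<in>X. measure_pmf.prob (D j) (B j))"
proof -
  have "{F. \<forall>j\<in>X. F j \<in> B j} = Pi X B" by (auto simp: Pi_def)
  then show ?thesis using measure_Pi_pmf_Pi[OF assms, of d D B] by simp
qed

lemma prodP_i:
  assumes "finite X" "i \<in> X"
  shows "measure_pmf.prob (Pi_pmf X d D) {F. F i \<in> C \<and> (\<forall>j\<in>X-{i}. F j \<in> B j)}
     = measure_pmf.prob (D i) C * (\<Prod>j\<in>X-{i}. measure_pmf.prob (D j) (B j))"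
proof -
  have "{F. F i \<in> C \<and> (\<forall>j\<in>X-{i}. F j \<in> B j)} = {F. \<forall>j\<in>X. F j \<in> (if j = i then C else B j)}"
    using assms(2) by auto
  then have "measure_pmf.prob (Pi_pmf X d D) {F. F i \<in> C \<and> (\<forall>j\<in>X-{i}. F j \<in> B j)}
      = (\<Prod>j\<in>X. measure_pmf.prob (D j) (if j = i then C else B j))"
    using prodP[OF assms(1), where d=d and D=D and B="\<lambda>j. if j = i then C else B j"] by simp
  also have "\<dots> = measure_pmf.prob (D i) C * (\<Prod>j\<in>X-{i}. measure_pmf.prob (D j) (if j = i then C else B j))"
    using assms by (subst prod.remove[of X i]) auto
  also have "(\<Prod>j\<in>X-{i}. measure_pmf.prob (D j) (if j = i then C else B j)) = (\<Prod>j\<in>X-{i}. measure_pmf.prob (D j) (B j))"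
    by (rule prod.cong) auto
  finally show ?thesis .
qed

lemma prodP_single:
  assumes "finite X" "i \<in> X"
  shows "measure_pmf.prob (Pi_pmf X d D) {F. F i \<in> C} = measure_pmf.prob (D i) C"
  using prodP_i[OF assms, where C=C and d=d and D=D and B="\<lambda>_. UNIV"] by simp



lemma abstract_main:
  fixes X :: "'i set" and D :: "'i \<Rightarrow> 'b pmf" and h :: "'b \<Rightarrow> 'a set"
  assumes fin: "finite X"
   and half: "\<And>i. i \<in> X \<Longrightarrow> measure_pmf.prob (D i) {y. e1 \<in> h y} \<le> 1/2"
   and corr: "\<And>i. i \<in> X \<Longrightarrow> measure_pmf.prob (D i) {y. e \<notin> h y} * measure_pmf.prob (D i) {y. e1 \<notin> h y}
                 \<le> measure_pmf.prob (D i) {y. e \<notin> h y \<and> e1 \<notin> h y}"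
   and mu: "(\<Sum>i\<in>X. measure_pmf.prob (D i) {y. e \<in> h y}) \<le> \<mu>"
  shows "(\<Sum>i\<in>X. measure_pmf.prob (Pi_pmf X d D) {F. e \<in> h (F i) \<and> (e1 \<in> (\<Union>j\<in>X. h (F j))) = b})
     \<le> (2 + 2*\<mu>) * measure_pmf.prob (Pi_pmf X d D) {F. e \<in> (\<Union>j\<in>X. h (F j)) \<and> (e1 \<in> (\<Union>j\<in>X. h (F j))) = b}"
proof -
  let ?Q = "Pi_pmf X d D"
  define pr where "pr i S = measure_pmf.prob (D i) S" for i S
  define a where "a i = pr i {y. e1 \<notin> h y}" for i
  define \<beta> where "\<beta> i = pr i {y. e \<notin> h y}" for i
  define \<alpha> where "\<alpha> i = pr i {y. e \<notin> h y \<and> e1 \<notin> h y}" for i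
  define p where "p i = pr i {y. e \<in> h y}" for i
  define s where "s i = pr i {y. e \<in> h y \<and> e1 \<notin> h y}" for i
  define r where "r i = pr i {y. e \<in> h y \<and> e1 \<in> h y}" for i
  have nn: "0 \<le> pr i S" "pr i S \<le> 1" for i S unfolding pr_def by auto
  have p_rs: "p i = r i + s i" for i
  proof -
    have "{y. e \<in> h y} = {y. e \<in> h y \<and> e1 \<in> h y} \<union> {y. e \<in> h y \<and> e1 \<notin> h y}" by auto
    then have "p i = pr i ({y. e \<in> h y \<and> e1 \<in> h y} \<union> {y. e \<in> h y \<and> e1 \<notin> h y})" unfolding p_def by simp
    also have "\<dots> = r i + s i" unfolding pr_def r_def s_def by (rule pmf_union_disj) auto
    finally show ?thesis .
  qed
  have a_sa: "a i = s i + \<alpha> i" for i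
  proof -
    have "{y. e1 \<notin> h y} = {y. e \<in> h y \<and> e1 \<notin> h y} \<union> {y. e \<notin> h y \<and> e1 \<notin> h y}" by auto
    then have "a i = pr i ({y. e \<in> h y \<and> e1 \<notin> h y} \<union> {y. e \<notin> h y \<and> e1 \<notin> h y})" unfolding a_def by simp
    also have "\<dots> = s i + \<alpha> i" unfolding pr_def \<alpha>_def s_def by (rule pmf_union_disj) auto
    finally show ?thesis .
  qed
  have b_p: "\<beta> i = 1 - p i" for i
  proof -
    have "{y. e \<notin> h y} = UNIV - {y. e \<in> h y}" by auto
    then show ?thesis unfolding \<beta>_def p_def pr_def by (simp add: pmf_compl)
  qed
  have r_c: "pr i {y. e \<in> h y \<longrightarrow> e1 \<notin> h y} = 1 - r i" for i
  proof -
    have "{y. e \<in> h y \<longrightarrow> e1 \<notin> h y} = UNIV - {y. e \<in> h y \<and> e1 \<in> h y}" by auto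
    then show ?thesis unfolding r_def pr_def by (simp add: pmf_compl)
  qed
  have prodQ: "measure_pmf.prob ?Q {F. \<forall>j\<in>X. F j \<in> B j} = (\<Prod>j\<in>X. pr j (B j))" for B
    unfolding pr_def by (rule prodP[OF fin])
  have prodQi: "i \<in> X \<Longrightarrow> measure_pmf.prob ?Q {F. F i \<in> C \<and> (\<forall>j\<in>X-{i}. F j \<in> B j)}
     = pr i C * (\<Prod>j\<in>X-{i}. pr j (B j))" for i C B
    unfolding pr_def by (rule prodP_i[OF fin])
  define EF where "EF = {F. e1 \<notin> (\<Union>j\<in>X. h (F j))}"
  define ENN where "ENN = {F. \<forall>j\<in>X. F j \<in> {y. e \<notin> h y \<and> e1 \<notin> h y}}"
  have PEF: "measure_pmf.prob ?Q EF = (\<Prod>j\<in>X. a j)"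
  proof -
    have "EF = {F. \<forall>j\<in>X. F j \<in> {y. e1 \<notin> h y}}" unfolding EF_def by auto
    then show ?thesis using prodQ[of "\<lambda>_. {y. e1 \<notin> h y}"] unfolding a_def by simp
  qed
  have PENN: "measure_pmf.prob ?Q ENN = (\<Prod>j\<in>X. \<alpha> j)"
    unfolding ENN_def \<alpha>_def by (rule prodQ)
  have PEe: "measure_pmf.prob ?Q {F. e \<in> (\<Union>j\<in>X. h (F j))} = 1 - (\<Prod>j\<in>X. \<beta> j)"
  proof -
    have "{F. e \<in> (\<Union>j\<in>X. h (F j))} = UNIV - {F. \<forall>j\<in>X. F j \<in> {y. e \<notin> h y}}" by auto
    then show ?thesis using prodQ[of "\<lambda>_. {y. e \<notin> h y}"] unfolding \<beta>_def by (simp add: pmf_compl)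
  qed
  have Pboth: "measure_pmf.prob ?Q {F. \<exists>j\<in>X. e \<in> h (F j) \<and> e1 \<in> h (F j)} = 1 - (\<Prod>j\<in>X. 1 - r j)"
  proof -
    have "{F. \<exists>j\<in>X. e \<in> h (F j) \<and> e1 \<in> h (F j)} = UNIV - {F. \<forall>j\<in>X. F j \<in> {y. \<not> (e \<in> h y \<and> e1 \<in> h y)}}" by auto
    then show ?thesis using prodQ[of "\<lambda>_. {y. \<not> (e \<in> h y \<and> e1 \<in> h y)}"] by (simp add: pmf_compl r_c)
  qed
  have PEiF: "measure_pmf.prob ?Q {F. e \<in> h (F i) \<and> e1 \<notin> (\<Union>j\<in>X. h (F j))} = s i * (\<Prod>j\<in>X-{i}. a j)"
    if "i \<in> X" for i
  proof -
    have "{F. e \<in> h (F i) \<and> e1 \<notin> (\<Union>j\<in>X. h (F j))} = {F. F i \<in> {y. e \<in> h y \<and> e1 \<notin> h y} \<and> (\<forall>j\<in>X-{i}. F j \<in> {y. e1 \<notin> h y})}"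
      using that by auto
    then show ?thesis using prodQi[OF that, of "{y. e \<in> h y \<and> e1 \<notin> h y}" "\<lambda>_. {y. e1 \<notin> h y}"] unfolding s_def a_def by simp
  qed
  have PEi: "measure_pmf.prob ?Q {F. e \<in> h (F i)} = p i" if "i \<in> X" for i
    unfolding p_def pr_def using prodP_single[OF fin that, of d D "{y. e \<in> h y}"] by simp
  have PA: "measure_pmf.prob ?Q {F. e \<in> (\<Union>j\<in>X. h (F j)) \<and> e1 \<notin> (\<Union>j\<in>X. h (F j))} = (\<Prod>j\<in>X. a j) - (\<Prod>j\<in>X. \<alpha> j)"
  proof -
    have "{F. e \<in> (\<Union>j\<in>X. h (F j)) \<and> e1 \<notin> (\<Union>j\<in>X. h (F j))} = EF - ENN" unfolding EF_def ENN_def by auto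
    moreover have "ENN \<subseteq> EF" unfolding EF_def ENN_def by auto
    ultimately show ?thesis using PEF PENN by (simp add: pmf_diff)
  qed
  have a_pos: "1/2 \<le> a i" if "i \<in> X" for i
  proof -
    have "{y. e1 \<notin> h y} = UNIV - {y. e1 \<in> h y}" by auto
    then have "a i = 1 - pr i {y. e1 \<in> h y}" unfolding a_def pr_def by (simp add: pmf_compl)
    then show ?thesis using half[OF that] unfolding pr_def by simp
  qed
  have a_le: "a i \<le> 1" for i unfolding a_def using nn by simp
  have s_nn: "0 \<le> s i" "0 \<le> r i" "0 \<le> \<alpha> i" "0 \<le> p i" "0 \<le> \<beta> i" for i
    unfolding s_def r_def \<alpha>_def p_def \<beta>_def using nn by auto
  have s_le_p: "s i \<le> p i" for i using p_rs s_nn by (simp add: add_increasing)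
  have r_le_p: "r i \<le> p i" for i using p_rs s_nn by simp
  have p_le: "p i \<le> 1" for i unfolding p_def using nn by simp
  have r_le: "r i \<le> 1" for i using r_le_p p_le order_trans by blast
  have sumP: "sum p X \<le> \<mu>" using mu unfolding p_def pr_def by simp
  have sumP0: "0 \<le> sum p X" using s_nn by (simp add: sum_nonneg)
  have Pa0: "0 \<le> (\<Prod>j\<in>X. a j)" using a_sa s_nn by (simp add: prod_nonneg)
  show ?thesis
  proof (cases b)
    case False
    define t where "t i = s i / a i" for i
    have t01: "0 \<le> t i \<and> t i \<le> 1" if "i \<in> X" for i
      using a_pos[OF that] s_nn[of i] a_sa[of i] unfolding t_def by (auto simp: divide_simps)
    have t2: "t i \<le> 2 * s i" if "i \<in> X" for i
    proof -
      have "s i * 1 \<le> s i * (2 * a i)" using a_pos[OF that] s_nn[of i] by (intro mult_left_mono) auto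
      then show ?thesis using a_pos[OF that] unfolding t_def by (auto simp: divide_simps algebra_simps)
    qed
    have T_le: "sum t X \<le> 2 * \<mu>"
    proof -
      have "sum t X \<le> (\<Sum>i\<in>X. 2 * s i)" by (rule sum_mono) (rule t2)
      also have "\<dots> \<le> (\<Sum>i\<in>X. 2 * p i)" by (rule sum_mono) (simp add: s_le_p)
      also have "\<dots> \<le> 2 * \<mu>" using sumP by (simp add: sum_distrib_left[symmetric])
      finally show ?thesis .
    qed
    have T0: "0 \<le> sum t X" using t01 by (simp add: sum_nonneg)
    have Pi_rm: "(\<Prod>j\<in>X-{i}. a j) = (\<Prod>j\<in>X. a j) / a i" if "i \<in> X" for i
      using a_pos[OF that] prod.remove[OF fin that, of a] by simp
    have LHS: "(\<Sum>i\<in>X. measure_pmf.prob ?Q {F. e \<in> h (F i) \<and> (e1 \<in> (\<Union>j\<in>X. h (F j))) = b})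
        = (\<Prod>j\<in>X. a j) * sum t X"
    proof -
      have "(\<Sum>i\<in>X. measure_pmf.prob ?Q {F. e \<in> h (F i) \<and> (e1 \<in> (\<Union>j\<in>X. h (F j))) = b})
          = (\<Sum>i\<in>X. (\<Prod>j\<in>X. a j) * t i)"
        using False PEiF Pi_rm by (intro sum.cong) (auto simp: t_def)
      then show ?thesis by (simp add: sum_distrib_left)
    qed
    have alpha_t: "(\<Prod>j\<in>X. \<alpha> j) = (\<Prod>j\<in>X. a j) * (\<Prod>j\<in>X. 1 - t j)"
    proof -
      have "(\<Prod>j\<in>X. \<alpha> j) = (\<Prod>j\<in>X. a j * (1 - t j))"
      proof (rule prod.cong[OF refl])
        fix j assume j: "j \<in> X"
        have "a j \<noteq> 0" using a_pos[OF j] by auto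
        then have "a j * (1 - t j) = a j - s j" unfolding t_def by (simp add: right_diff_distrib)
        then show "\<alpha> j = a j * (1 - t j)" using a_sa[of j] by simp
      qed
      then show ?thesis by (simp add: prod.distrib)
    qed
    have RHS: "measure_pmf.prob ?Q {F. e \<in> (\<Union>j\<in>X. h (F j)) \<and> (e1 \<in> (\<Union>j\<in>X. h (F j))) = b}
       = (\<Prod>j\<in>X. a j) * (1 - (\<Prod>j\<in>X. 1 - t j))"
      using False PA alpha_t by (simp add: algebra_simps)
    have key: "sum t X \<le> (1 + sum t X) * (1 - (\<Prod>j\<in>X. 1 - t j))"
      by (rule prod_one_minus_bound'[OF fin t01])
    have R0: "0 \<le> (1 - (\<Prod>j\<in>X. 1 - t j))" using key T0
      by (smt (verit) mult_nonneg_nonneg zero_le_mult_iff)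
    have "(\<Prod>j\<in>X. a j) * sum t X \<le> (\<Prod>j\<in>X. a j) * ((1 + sum t X) * (1 - (\<Prod>j\<in>X. 1 - t j)))"
      using key Pa0 by (rule mult_left_mono)
    also have "\<dots> \<le> (\<Prod>j\<in>X. a j) * ((2 + 2 * \<mu>) * (1 - (\<Prod>j\<in>X. 1 - t j)))"
      using T_le R0 Pa0 by (intro mult_left_mono mult_right_mono) auto
    finally show ?thesis unfolding LHS RHS by (simp add: algebra_simps)
  next
    case True
    define Pa where "Pa = (\<Prod>j\<in>X. a j)"
    define Pb where "Pb = (\<Prod>j\<in>X. \<beta> j)"
    define Pal where "Pal = (\<Prod>j\<in>X. \<alpha> j)"
    define RHS where "RHS = measure_pmf.prob ?Q {F. e \<in> (\<Union>j\<in>X. h (F j)) \<and> e1 \<in> (\<Union>j\<in>X. h (F j))}"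
    have RHS_eq: "RHS = (1 - Pb) - (Pa - Pal)"
    proof -
      have "{F. e \<in> (\<Union>j\<in>X. h (F j)) \<and> e1 \<in> (\<Union>j\<in>X. h (F j))}
         = {F. e \<in> (\<Union>j\<in>X. h (F j))} - {F. e \<in> (\<Union>j\<in>X. h (F j)) \<and> e1 \<notin> (\<Union>j\<in>X. h (F j))}" by auto
      then have "RHS = measure_pmf.prob ?Q {F. e \<in> (\<Union>j\<in>X. h (F j))} - measure_pmf.prob ?Q {F. e \<in> (\<Union>j\<in>X. h (F j)) \<and> e1 \<notin> (\<Union>j\<in>X. h (F j))}"
        unfolding RHS_def by (simp only:) (rule pmf_diff, auto)
      then show ?thesis using PEe PA unfolding Pa_def Pb_def Pal_def by simp
    qed
    have RHS_ge1: "1 - (\<Prod>j\<in>X. 1 - r j) \<le> RHS"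
      unfolding RHS_def Pboth[symmetric] by (rule measure_pmf.finite_measure_mono) auto
    have harris: "Pa * Pb \<le> Pal"
    proof -
      have "Pa * Pb = (\<Prod>j\<in>X. a j * \<beta> j)" unfolding Pa_def Pb_def by (simp add: prod.distrib)
      also have "\<dots> \<le> Pal" unfolding Pal_def
        using corr s_nn a_sa unfolding a_def \<beta>_def \<alpha>_def pr_def by (intro prod_mono) (auto simp: mult.commute)
      finally show ?thesis .
    qed
    have Pa1: "Pa \<le> 1" unfolding Pa_def using a_le Pa0 by (intro prod_le_1) (auto simp: a_sa s_nn add_nonneg_nonneg)
    have Pb_eq: "Pb = (\<Prod>j\<in>X. 1 - p j)" unfolding Pb_def using b_p by simp
    have Pb1: "Pb \<le> 1" unfolding Pb_eq using s_nn p_le by (intro prod_le_1) auto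
    have RHS_ge2: "(1 - Pb) * (1 - Pa) \<le> RHS" using RHS_eq harris by (simp add: algebra_simps)
    have RHS0: "0 \<le> RHS" unfolding RHS_def by simp
    have LHSi: "measure_pmf.prob ?Q {F. e \<in> h (F i) \<and> (e1 \<in> (\<Union>j\<in>X. h (F j))) = b} \<le> r i + p i * (1 - Pa)"
      if i: "i \<in> X" for i
    proof -
      have "{F. e \<in> h (F i) \<and> (e1 \<in> (\<Union>j\<in>X. h (F j))) = b} = {F. e \<in> h (F i)} - {F. e \<in> h (F i) \<and> e1 \<notin> (\<Union>j\<in>X. h (F j))}"
        using True by auto
      then have "measure_pmf.prob ?Q {F. e \<in> h (F i) \<and> (e1 \<in> (\<Union>j\<in>X. h (F j))) = b}
          = measure_pmf.prob ?Q {F. e \<in> h (F i)} - measure_pmf.prob ?Q {F. e \<in> h (F i) \<and> e1 \<notin> (\<Union>j\<in>X. h (F j))}"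
        by (simp only:) (rule pmf_diff, auto)
      also have "\<dots> = p i - s i * (\<Prod>j\<in>X-{i}. a j)" using PEi[OF i] PEiF[OF i] by simp
      also have "\<dots> = r i + s i * (1 - (\<Prod>j\<in>X-{i}. a j))" using p_rs[of i] by (simp add: algebra_simps)
      also have "\<dots> \<le> r i + p i * (1 - Pa)"
      proof -
        have Pr0: "0 \<le> (\<Prod>j\<in>X-{i}. a j)" using a_sa s_nn by (simp add: prod_nonneg)
        have "Pa = a i * (\<Prod>j\<in>X-{i}. a j)" unfolding Pa_def by (rule prod.remove[OF fin i])
        also have "\<dots> \<le> (\<Prod>j\<in>X-{i}. a j)" using a_le[of i] Pr0 a_sa[of i] s_nn[of i] by (intro mult_left_le_one_le) auto
        finally have "1 - (\<Prod>j\<in>X-{i}. a j) \<le> 1 - Pa" by simp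
        then have "s i * (1 - (\<Prod>j\<in>X-{i}. a j)) \<le> s i * (1 - Pa)" using s_nn by (intro mult_left_mono) auto
        also have "\<dots> \<le> p i * (1 - Pa)" using s_le_p Pa1 by (intro mult_right_mono) auto
        finally show ?thesis by simp
      qed
      finally show ?thesis .
    qed
    have sumL: "(\<Sum>i\<in>X. measure_pmf.prob ?Q {F. e \<in> h (F i) \<and> (e1 \<in> (\<Union>j\<in>X. h (F j))) = b})
        \<le> sum r X + sum p X * (1 - Pa)"
    proof -
      have "(\<Sum>i\<in>X. measure_pmf.prob ?Q {F. e \<in> h (F i) \<and> (e1 \<in> (\<Union>j\<in>X. h (F j))) = b})
         \<le> (\<Sum>i\<in>X. r i + p i * (1 - Pa))" by (rule sum_mono) (rule LHSi)
      also have "\<dots> = sum r X + sum p X * (1 - Pa)" by (simp add: sum.distrib sum_distrib_right)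
      finally show ?thesis .
    qed
    have R_le: "sum r X \<le> sum p X" by (rule sum_mono) (rule r_le_p)
    have R0: "0 \<le> sum r X" using s_nn by (simp add: sum_nonneg)
    have k1: "sum r X \<le> (1 + sum r X) * (1 - (\<Prod>j\<in>X. 1 - r j))"
      by (rule prod_one_minus_bound'[OF fin]) (auto simp: s_nn r_le)
    have k2: "sum p X \<le> (1 + sum p X) * (1 - Pb)"
      unfolding Pb_eq by (rule prod_one_minus_bound'[OF fin]) (auto simp: s_nn p_le)
    have t1: "sum r X \<le> (1 + sum r X) * RHS"
      using k1 RHS_ge1 R0 by (smt (verit) mult_left_mono)
    have "sum p X * (1 - Pa) \<le> ((1 + sum p X) * (1 - Pb)) * (1 - Pa)" using k2 Pa1 by (intro mult_right_mono) auto
    also have "\<dots> = (1 + sum p X) * ((1 - Pb) * (1 - Pa))" by simp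
    also have "\<dots> \<le> (1 + sum p X) * RHS" using RHS_ge2 sumP0 by (intro mult_left_mono) auto
    finally have t2: "sum p X * (1 - Pa) \<le> (1 + sum p X) * RHS" .
    have "sum r X + sum p X * (1 - Pa) \<le> (1 + sum r X) * RHS + (1 + sum p X) * RHS" using t1 t2 by simp
    also have "\<dots> = (2 + sum r X + sum p X) * RHS" by (simp add: algebra_simps)
    also have "\<dots> \<le> (2 + 2 * \<mu>) * RHS" using R_le sumP RHS0 by (intro mult_right_mono) auto
    finally show ?thesis using sumL True unfolding RHS_def by simp
  qed
qed



definition hh :: "bool \<times> 'a set \<Rightarrow> 'a set" where
  "hh y = (if fst y then snd y else {})"

definition Psi :: "'i set \<Rightarrow> ('i \<Rightarrow> bool \<times> 'a set) \<Rightarrow> 'i set \<times> ('i \<Rightarrow> 'a set)" where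
  "Psi X F = ({i\<in>X. fst (F i)}, \<lambda>i. if i \<in> X \<and> fst (F i) then snd (F i) else {})"

lemma Pi_pair_expand:
  assumes "finite X"
  shows "Pi_pmf X (False, {}) (\<lambda>i. pair_pmf (B i) (R i)) =
    Pi_pmf X False B \<bind> (\<lambda>f. Pi_pmf X {} R \<bind> (\<lambda>g. return_pmf (\<lambda>i. if i \<in> X then (f i, g i) else (False, {}))))"
proof -
  have "Pi_pmf X (False, {}) (\<lambda>i. pair_pmf (B i) (R i)) =
        Pi_pmf X (False, {}) (\<lambda>i. B i \<bind> (\<lambda>b. R i \<bind> (\<lambda>T. return_pmf (b, T))))"
    unfolding pair_pmf_def by simp
  also have "\<dots> = Pi_pmf X False B \<bind> (\<lambda>f. Pi_pmf X (False, {}) (\<lambda>i. R i \<bind> (\<lambda>T. return_pmf (f i, T))))"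
    by (rule Pi_pmf_bind[OF assms])
  also have "\<dots> = Pi_pmf X False B \<bind> (\<lambda>f. Pi_pmf X {} R \<bind> (\<lambda>g. Pi_pmf X (False, {}) (\<lambda>i. return_pmf (f i, g i))))"
    by (subst Pi_pmf_bind[OF assms, where d'="{}"]) simp
  also have "\<dots> = Pi_pmf X False B \<bind> (\<lambda>f. Pi_pmf X {} R \<bind> (\<lambda>g. return_pmf (\<lambda>i. if i \<in> X then (f i, g i) else (False, {}))))"
    using assms by simp
  finally show ?thesis .
qed

lemma fin_edges: "finite (edges m k)"
proof -
  define V where "V = insert Src ((\<lambda>(i, S). Lay i S) ` ({1,2,3::nat} \<times> Pow {..<m}))"
  have "finite V" unfolding V_def by auto
  moreover have "edges m k \<subseteq> V \<times> V" unfolding edges_def V_def by auto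
  ultimately show ?thesis by (meson finite_SigmaI finite_subset)
qed

lemma shadow_rep:
  "shadow m k = map_pmf (Psi (edges m k))
     (Pi_pmf (edges m k) (False, {}) (\<lambda>i. pair_pmf (bernoulli_pmf (xval m k i)) (rand_subset (edges m k) (xsub m k i))))"
proof -
  define X where "X = edges m k"
  define B where "B i = bernoulli_pmf (xval m k i)" for i
  define R where "R i = rand_subset X (xsub m k i)" for i
  have fin: "finite X" unfolding X_def by (rule fin_edges)
  have "shadow m k = Pi_pmf X False B \<bind> (\<lambda>f. Pi_pmf {x\<in>X. f x} {} R \<bind> (\<lambda>g. return_pmf ({x\<in>X. f x}, g)))"
    unfolding shadow_def rand_subset_def X_def[symmetric] B_def R_def by (simp add: bind_map_pmf)
  also have "\<dots> = Pi_pmf X False B \<bind> (\<lambda>f. Pi_pmf X {} R \<bind> (\<lambda>g. return_pmf ({x\<in>X. f x}, \<lambda>i. if i \<in> X \<and> f i then g i else {})))"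
  proof (rule bind_pmf_cong[OF refl])
    fix f
    have "Pi_pmf {x\<in>X. f x} {} R = map_pmf (\<lambda>g i. if i \<in> {x\<in>X. f x} then g i else {}) (Pi_pmf X {} R)"
      using fin by (intro Pi_pmf_subset) auto
    then show "Pi_pmf {x\<in>X. f x} {} R \<bind> (\<lambda>g. return_pmf ({x\<in>X. f x}, g)) =
       Pi_pmf X {} R \<bind> (\<lambda>g. return_pmf ({x\<in>X. f x}, \<lambda>i. if i \<in> X \<and> f i then g i else {}))"
      by (simp add: bind_map_pmf)
  qed
  also have "\<dots> = map_pmf (Psi X) (Pi_pmf X (False, {}) (\<lambda>i. pair_pmf (B i) (R i)))"
    unfolding Pi_pair_expand[OF fin]
    apply (simp add: map_bind_pmf Psi_def)
    apply (intro bind_pmf_cong refl arg_cong[where f=return_pmf])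
    apply (auto simp: fun_eq_iff)
    done
  finally show ?thesis unfolding X_def B_def R_def .
qed



lemma bern_True_le: "0 \<le> p \<Longrightarrow> pmf (bernoulli_pmf p) True \<le> p"
proof (cases "p \<le> 1")
  case True
  assume "0 \<le> p" then show ?thesis using True by simp
next
  case False
  then show ?thesis using pmf_le_1[of "bernoulli_pmf p" True] by simp
qed

lemma pair_prod_gen:
  "measure_pmf.prob (pair_pmf M N) (A \<times> B) = measure_pmf.prob M A * measure_pmf.prob N B"
proof -
  have "measure_pmf.prob (pair_pmf M N) (A \<times> B) = measure_pmf.prob (pair_pmf M N) ((A \<times> B) \<inter> set_pmf (pair_pmf M N))"
    by (rule measure_Int_set_pmf[symmetric])
  also have "(A \<times> B) \<inter> set_pmf (pair_pmf M N) = (A \<inter> set_pmf M) \<times> (B \<inter> set_pmf N)" by auto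
  also have "measure_pmf.prob (pair_pmf M N) \<dots> = measure_pmf.prob M (A \<inter> set_pmf M) * measure_pmf.prob N (B \<inter> set_pmf N)"
    by (rule measure_pmf_prob_product) (auto intro: countable_Int2)
  finally show ?thesis by (simp add: measure_Int_set_pmf)
qed

lemma D_prob:
  "measure_pmf.prob (pair_pmf (bernoulli_pmf x) R) {v. Q (hh v)}
    = pmf (bernoulli_pmf x) True * measure_pmf.prob R {T. Q T}
      + (1 - pmf (bernoulli_pmf x) True) * (if Q {} then 1 else 0)"
proof -
  have eq: "{v. Q (hh v)} = ({True} \<times> {T. Q T}) \<union> ({False} \<times> (if Q {} then UNIV else {}))"
    by (auto simp: hh_def)
  have "measure_pmf.prob (pair_pmf (bernoulli_pmf x) R) {v. Q (hh v)}
     = measure_pmf.prob (pair_pmf (bernoulli_pmf x) R) ({True} \<times> {T. Q T})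
       + measure_pmf.prob (pair_pmf (bernoulli_pmf x) R) ({False} \<times> (if Q {} then UNIV else {}))"
    unfolding eq by (rule pmf_union_disj) auto
  also have "\<dots> = pmf (bernoulli_pmf x) True * measure_pmf.prob R {T. Q T}
      + pmf (bernoulli_pmf x) False * measure_pmf.prob R (if Q {} then UNIV else {})"
    by (simp add: pair_prod_gen measure_pmf_single)
  also have "\<dots> = pmf (bernoulli_pmf x) True * measure_pmf.prob R {T. Q T}
      + (1 - pmf (bernoulli_pmf x) True) * (if Q {} then 1 else 0)"
    by (simp add: pmf_False_conv_True)
  finally show ?thesis .
qed

lemma rs_in:
  assumes "finite X" "e \<in> X"
  shows "measure_pmf.prob (rand_subset X y) {T. e \<in> T} = pmf (bernoulli_pmf (y e)) True"
proof -
  have "measure_pmf.prob (rand_subset X y) {T. e \<in> T}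
     = measure_pmf.prob (Pi_pmf X False (\<lambda>x. bernoulli_pmf (y x))) {f. f e \<in> {True}}"
    unfolding rand_subset_def using assms by simp
  also have "\<dots> = measure_pmf.prob (bernoulli_pmf (y e)) {True}"
    by (rule prodP_single[OF assms])
  finally show ?thesis by (simp add: measure_pmf_single)
qed

lemma rs_notin:
  assumes "finite X" "e \<in> X"
  shows "measure_pmf.prob (rand_subset X y) {T. e \<notin> T} = 1 - pmf (bernoulli_pmf (y e)) True"
proof -
  have "{T. e \<notin> T} = UNIV - {T. e \<in> T}" by auto
  then show ?thesis using rs_in[OF assms] by (simp add: pmf_compl)
qed

lemma rs_corr:
  assumes "finite X" "e \<in> X" "e1 \<in> X"
  shows "measure_pmf.prob (rand_subset X y) {T. e \<notin> T} * measure_pmf.prob (rand_subset X y) {T. e1 \<notin> T}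
     \<le> measure_pmf.prob (rand_subset X y) {T. e \<notin> T \<and> e1 \<notin> T}"
proof (cases "e = e1")
  case True
  have "measure_pmf.prob (rand_subset X y) {T. e \<notin> T} * measure_pmf.prob (rand_subset X y) {T. e1 \<notin> T}
     \<le> 1 * measure_pmf.prob (rand_subset X y) {T. e1 \<notin> T}"
    by (intro mult_right_mono) auto
  then show ?thesis using True by simp
next
  case False
  let ?P = "Pi_pmf X False (\<lambda>x. bernoulli_pmf (y x))"
  let ?g = "\<lambda>j. measure_pmf.prob (bernoulli_pmf (y j)) (if j = e \<or> j = e1 then {False} else UNIV)"
  have "measure_pmf.prob (rand_subset X y) {T. e \<notin> T \<and> e1 \<notin> T}
     = measure_pmf.prob ?P {f. \<forall>j\<in>X. f j \<in> (if j = e \<or> j = e1 then {False} else UNIV)}"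
    unfolding rand_subset_def using assms by (simp; intro arg_cong[where f="measure_pmf.prob ?P"]; auto)
  also have "\<dots> = (\<Prod>j\<in>X. ?g j)" by (rule prodP[OF assms(1)])
  also have "\<dots> = (\<Prod>j\<in>{e, e1}. ?g j)"
    using assms by (intro prod.mono_neutral_right) auto
  also have "\<dots> = ?g e * ?g e1" using False by simp
  also have "\<dots> = (1 - pmf (bernoulli_pmf (y e)) True) * (1 - pmf (bernoulli_pmf (y e1)) True)"
    by (simp add: measure_pmf_single pmf_False_conv_True)
  finally show ?thesis using rs_notin[OF assms(1,2)] rs_notin[OF assms(1,3)] by simp
qed



lemma edges_layer: "(a, b) \<in> edges m k \<Longrightarrow> vlayer b = Suc (vlayer a)"
  unfolding edges_def by auto

lemma reach:
  assumes "(a, b) \<in> (edges m k)\<^sup>*"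
  shows "a = b \<or> (vlayer a < vlayer b \<and> (vlayer b = Suc (vlayer a) \<longrightarrow> (a, b) \<in> edges m k))"
  using assms
proof (induction rule: rtrancl_induct)
  case base then show ?case by simp
next
  case (step c b)
  have l: "vlayer b = Suc (vlayer c)" using edges_layer[OF step.hyps(2)] .
  from step.IH show ?case
  proof
    assume "a = c" then show ?thesis using step.hyps(2) l by simp
  next
    assume "vlayer a < vlayer c \<and> (vlayer c = Suc (vlayer a) \<longrightarrow> (a, c) \<in> edges m k)"
    then show ?thesis using l by simp
  qed
qed

lemma Nb_ge2:
  assumes "1 \<le> k" "2 * k < m"
  shows "2 \<le> Nb m k"
proof -
  obtain n' where n': "m - k = Suc n'" using assms by (cases "m - k") auto
  obtain k' where k': "k = Suc k'" using assms by (cases k) auto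
  have "k' \<le> n'" "Suc k' \<le> n'" using assms n' k' by auto
  then have "1 \<le> n' choose k'" "1 \<le> n' choose Suc k'" by (simp_all add: Suc_le_eq)
  then have "2 \<le> Suc n' choose Suc k'" by simp
  moreover have "(m - k) choose k = Suc n' choose Suc k'" by (subst n', subst k', rule refl)
  ultimately have "2 \<le> (m - k) choose k" by simp
  then show ?thesis unfolding Nb_def by (metis of_nat_le_iff of_nat_numeral)
qed

lemma div_nat_le: "0 \<le> (a::real) \<Longrightarrow> a / real n \<le> a"
proof (cases n)
  case (Suc n')
  assume a: "0 \<le> a"
  have "a * 1 \<le> a * real n" using a Suc by (intro mult_left_mono) auto
  then show ?thesis using Suc by (auto simp: divide_le_eq)
qed simp

lemma xval_bounds:
  assumes "1 \<le> k" "2 * k < m"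
  shows "0 \<le> xval m k i" "xval m k i \<le> 1 / Nb m k" "xval m k i \<le> 1/2"
proof -
  have N: "2 \<le> Nb m k" using Nb_ge2[OF assms] .
  have "0 < (2 * k) choose k" by simp
  then have C: "1 \<le> real ((2 * k) choose k)" by linarith
  show "0 \<le> xval m k i" unfolding xval_def using N by simp
  show *: "xval m k i \<le> 1 / Nb m k" unfolding xval_def using N C
    by (auto simp: divide_simps)
  show "xval m k i \<le> 1/2" using * N by (smt (verit) frac_le)
qed

lemma xsub_nonneg: "0 \<le> xsub m k i e"
  unfolding xsub_def Nb_def by simp

lemma sum_le_supp:
  fixes f :: "'i \<Rightarrow> real"
  assumes "finite X" "finite Z" "\<And>i. i \<in> X \<Longrightarrow> i \<notin> Z \<Longrightarrow> f i = 0" "\<And>i. 0 \<le> f i"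
  shows "sum f X \<le> sum f Z"
proof -
  have "sum f X = sum f (X \<inter> Z)" using assms by (intro sum.mono_neutral_right) auto
  also have "\<dots> \<le> sum f Z" using assms by (intro sum_mono2) auto
  finally show ?thesis .
qed

lemma sum_Un3_le:
  fixes f :: "'i \<Rightarrow> real"
  assumes "finite A" "finite B" "\<And>i. 0 \<le> f i"
  shows "sum f (A \<union> B) \<le> sum f A + sum f B"
proof -
  have "sum f (A \<union> B) = sum f A + sum f B - sum f (A \<inter> B)" using assms by (simp add: sum_Un)
  moreover have "0 \<le> sum f (A \<inter> B)" using assms by (simp add: sum_nonneg)
  ultimately show ?thesis by simp
qed



lemma edge_l1: "i \<in> edges m k \<Longrightarrow> elayer i = 1 \<Longrightarrow> \<exists>u. i = (Src, Lay 1 u) \<and> u \<subseteq> {..<m} \<and> card u = k"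
  unfolding edges_def elayer_def by auto

lemma edge_l2: "i \<in> edges m k \<Longrightarrow> elayer i = 2 \<Longrightarrow> \<exists>u w. i = (Lay 1 u, Lay 2 w) \<and> u \<subseteq> w \<and> card u = k"
  unfolding edges_def elayer_def by auto

lemma div2_le: "0 \<le> (a::real) \<Longrightarrow> 0 \<le> b \<Longrightarrow> a / (b * real n) \<le> a / b"
proof (cases "n = 0")
  case False
  assume a: "0 \<le> a" "0 \<le> b"
  have "a / (b * real n) = (a / b) / real n" by simp
  also have "\<dots> \<le> a / b" using a by (intro div_nat_le) simp
  finally show ?thesis .
qed simp

lemma xsub_self: "xsub m k e e = 1"
  unfolding xsub_def by simp

lemma mu_bound:
  assumes k1: "1 \<le> k" and km: "2 * k < m" and e: "e \<in> edges m k"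
  shows "(\<Sum>i\<in>edges m k. xval m k i * xsub m k i e) \<le> 3"
proof -
  define X where "X = edges m k"
  define f where "f i = xval m k i * xsub m k i e" for i
  have fin: "finite X" unfolding X_def by (rule fin_edges)
  have f0: "0 \<le> f i" for i unfolding f_def using xval_bounds[OF k1 km] xsub_nonneg by simp
  have fe: "f e \<le> 1/2" unfolding f_def xsub_self using xval_bounds[OF k1 km] by simp
  have N2: "2 \<le> Nb m k" by (rule Nb_ge2[OF k1 km])
  have xsub_le1_l2: "xsub m k i e \<le> 1" if "elayer e = 2" for i
  proof -
    have "0 < (2 * k) choose k" by simp
    then have "1 \<le> real ((2 * k) choose k)" by linarith
    then have "1 / real ((2 * k) choose k) \<le> 1" by (simp add: divide_le_eq)
    then show ?thesis unfolding xsub_def using that by auto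
  qed
  from e consider
      (A) S where "e = (Src, Lay 1 S)"
    | (B) u w where "e = (Lay 1 u, Lay 2 w)" "u \<subseteq> {..<m}" "card u = k" "w \<subseteq> {..<m}" "card w = 2 * k" "u \<subseteq> w"
    | (C) S w where "e = (Lay 2 w, Lay 3 S)" "S \<subseteq> {..<m}" "card S = k" "w \<subseteq> {..<m}" "card w = 2 * k" "S \<subseteq> w"
    unfolding edges_def by blast
  then have "sum f X \<le> 3"
  proof cases
    case A
    have le: "elayer e = 1" using A by (simp add: elayer_def)
    have "sum f X \<le> sum f {e}"
    proof (rule sum_le_supp[OF fin _ _ f0])
      fix i assume "i \<in> X" "i \<notin> {e}"
      then show "f i = 0" unfolding f_def xsub_def using le by auto
    qed simp
    then show ?thesis using fe by simp
  next
    case B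
    have le: "elayer e = 2" using B by (simp add: elayer_def)
    define i0 where "i0 = (Src, Lay 1 u)"
    have "sum f X \<le> sum f {e, i0}"
    proof (rule sum_le_supp[OF fin _ _ f0])
      fix i assume i: "i \<in> X" "i \<notin> {e, i0}"
      have "xsub m k i e = 0"
      proof (cases "elayer i = 1")
        case True
        then obtain u' where u': "i = (Src, Lay 1 u')" using edge_l1 i unfolding X_def by blast
        have "e \<notin> Desc m k i"
        proof
          assume "e \<in> Desc m k i"
          then have "(Lay 1 u', Lay 1 u) \<in> (edges m k)\<^sup>*" unfolding Desc_def using u' B by simp
          from reach[OF this] have "u' = u" by simp
          then show False using i u' unfolding i0_def by simp
        qed
        then show ?thesis unfolding xsub_def using i le by auto
      next
        case False
        then show ?thesis unfolding xsub_def using i le by auto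
      qed
      then show "f i = 0" unfolding f_def by simp
    qed simp
    also have "\<dots> \<le> f e + f i0"
    proof -
      have "sum f ({e} \<union> {i0}) \<le> sum f {e} + sum f {i0}" by (rule sum_Un3_le) (auto simp: f0)
      moreover have "{e} \<union> {i0} = {e, i0}" by auto
      ultimately show ?thesis by simp
    qed
    also have "f i0 \<le> 1/2"
    proof -
      have "f i0 \<le> xval m k i0 * 1" unfolding f_def
        using xsub_le1_l2[OF le] xval_bounds[OF k1 km] by (intro mult_left_mono) auto
      then show ?thesis using xval_bounds(3)[OF k1 km, of i0] by simp
    qed
    finally show ?thesis using fe by simp
  next
    case C
    have le: "elayer e = 3" using C by (simp add: elayer_def)
    define U where "U = {u. u \<subseteq> w \<and> card u = k}"
    define I1 where "I1 = (\<lambda>u. (Src, Lay 1 u)) ` U"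
    define I2 where "I2 = (\<lambda>u. (Lay 1 u, Lay 2 w)) ` U"
    have finw: "finite w" using C(4) finite_subset by blast
    have cardU: "card U = (2 * k) choose k" unfolding U_def using n_subsets[OF finw, of k] C(5) by simp
    have finU: "finite U" unfolding U_def using finw by simp
    have finI: "finite I1" "finite I2" unfolding I1_def I2_def using finU by auto
    have cI: "card I1 \<le> (2 * k) choose k" "card I2 \<le> (2 * k) choose k"
      unfolding I1_def I2_def using card_image_le[OF finU] cardU by metis+
    have "sum f X \<le> sum f ({e} \<union> I1 \<union> I2)"
    proof (rule sum_le_supp[OF fin _ _ f0])
      fix i assume i: "i \<in> X" "i \<notin> {e} \<union> I1 \<union> I2"
      have "xsub m k i e = 0"
      proof (cases "elayer i = 1")
        case True
        then obtain u' where u': "i = (Src, Lay 1 u')" "u' \<subseteq> {..<m}" "card u' = k" using edge_l1 i unfolding X_def by blast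
        have "e \<notin> Desc m k i"
        proof
          assume "e \<in> Desc m k i"
          then have "(Lay 1 u', Lay 2 w) \<in> (edges m k)\<^sup>*" unfolding Desc_def using u' C by simp
          from reach[OF this] have "(Lay 1 u', Lay 2 w) \<in> edges m k" by simp
          then have "u' \<subseteq> w" unfolding edges_def by auto
          then have "i \<in> I1" unfolding I1_def U_def using u' by auto
          then show False using i by simp
        qed
        then show ?thesis unfolding xsub_def using i le by auto
      next
        case False
        note F1 = False
        show ?thesis
        proof (cases "elayer i = 2")
          case True
          then obtain u' w' where u': "i = (Lay 1 u', Lay 2 w')" "u' \<subseteq> w'" "card u' = k" using edge_l2 i unfolding X_def by blast
          have "e \<notin> Desc m k i"
          proof
            assume "e \<in> Desc m k i"
            then have "(Lay 2 w', Lay 2 w) \<in> (edges m k)\<^sup>*" unfolding Desc_def using u' C by simp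
            from reach[OF this] have "w' = w" by simp
            then have "i \<in> I2" unfolding I2_def U_def using u' by auto
            then show False using i by simp
          qed
          then show ?thesis unfolding xsub_def using i le F1 by auto
        next
          case False
          then show ?thesis unfolding xsub_def using i le F1 by auto
        qed
      qed
      then show "f i = 0" unfolding f_def by simp
    qed (use finI in simp)
    also have "\<dots> \<le> sum f ({e} \<union> I1) + sum f I2" by (rule sum_Un3_le) (use finI f0 in auto)
    also have "sum f ({e} \<union> I1) \<le> sum f {e} + sum f I1" by (rule sum_Un3_le) (use finI f0 in auto)
    also have "sum f I1 \<le> 1"
    proof -
      have Cmk: "0 < m choose k" using km by simp
      have "f i \<le> 1 / real (m choose k)" if "i \<in> I1" for i
      proof -
        obtain u where u: "i = (Src, Lay 1 u)" using \<open>i \<in> I1\<close> unfolding I1_def by auto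
        have l1: "elayer i = 1" using u by (simp add: elayer_def)
        have ne: "i \<noteq> e" using u C by simp
        have xv: "xval m k i = 1 / Nb m k" unfolding xval_def using l1 by simp
        have "xsub m k i e \<le> Nb m k / real (m choose k)"
          unfolding xsub_def using l1 ne le N2
          by (auto intro!: div2_le simp: Nb_def)
        then have "f i \<le> (1 / Nb m k) * (Nb m k / real (m choose k))"
          unfolding f_def xv using N2 by (intro mult_left_mono) auto
        also have "\<dots> = 1 / real (m choose k)" using N2 by simp
        finally show ?thesis .
      qed
      then have "sum f I1 \<le> real (card I1) * (1 / real (m choose k))" by (rule sum_bounded_above)
      also have "\<dots> \<le> real ((2 * k) choose k) * (1 / real (m choose k))"
        using cI by (intro mult_right_mono) auto
      also have "\<dots> \<le> 1"
      proof -
        have "(2 * k) choose k \<le> m choose k" using km by (intro binomial_right_mono) simp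
        then show ?thesis using Cmk by (simp add: divide_le_eq)
      qed
      finally show ?thesis .
    qed
    also have "sum f I2 \<le> 1/2"
    proof -
      have C2: "0 < real ((2 * k) choose k)" by simp
      have "f i \<le> 1 / (Nb m k * real ((2 * k) choose k))" if "i \<in> I2" for i
      proof -
        obtain u where u: "i = (Lay 1 u, Lay 2 w)" using \<open>i \<in> I2\<close> unfolding I2_def by auto
        have l2: "elayer i = 2" using u by (simp add: elayer_def)
        have xv: "xval m k i = 1 / (Nb m k * real ((2 * k) choose k))" unfolding xval_def using l2 by simp
        have "xsub m k i e \<le> 1" unfolding xsub_def using l2 by auto
        then have "f i \<le> (1 / (Nb m k * real ((2 * k) choose k))) * 1"
          unfolding f_def xv using N2 by (intro mult_left_mono) auto
        then show ?thesis by simp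
      qed
      then have "sum f I2 \<le> real (card I2) * (1 / (Nb m k * real ((2 * k) choose k)))" by (rule sum_bounded_above)
      also have "\<dots> \<le> real ((2 * k) choose k) * (1 / (Nb m k * real ((2 * k) choose k)))"
        using cI N2 by (intro mult_right_mono) auto
      also have "\<dots> = 1 / Nb m k" using C2 by simp
      also have "\<dots> \<le> 1/2" using N2 by (simp add: divide_le_eq)
      finally show ?thesis .
    qed
    finally show ?thesis using fe by simp
  qed
  then show ?thesis unfolding f_def X_def .
qed



lemma exp_ind_sum:
  assumes "finite Os"
  shows "measure_pmf.expectation p (\<lambda>\<omega>. \<Sum>e\<in>Os. indicator (B e) \<omega> :: real) = (\<Sum>e\<in>Os. measure_pmf.prob p (B e))"
  using assms by (subst Bochner_Integration.integral_sum) (auto simp: measure_pmf.emeasure_eq_measure)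

lemma cond_measure:
  assumes "set_pmf p \<inter> s \<noteq> {}"
  shows "measure_pmf.prob (cond_pmf p s) A = measure_pmf.prob p (s \<inter> A) / measure_pmf.prob p s"
  using assms by (simp add: cond_pmf.rep_eq measure_pmf.emeasure_eq_measure measure_pmf_zero_iff)

lemma card_ind: "finite Os \<Longrightarrow> real (card (Os \<inter> A)) = (\<Sum>e\<in>Os. if e \<in> A then 1 else 0)"
  by (simp add: sum.If_cases Int_def)

lemma setA_Psi: "setA (Psi X F) = (\<Union>j\<in>X. hh (F j))"
  unfolding setA_def Psi_def hh_def by auto

lemma multA_Psi: "multA' (Psi X F) e = card {i\<in>X. e \<in> hh (F i)}"
  unfolding multA'_def Psi_def hh_def by (auto intro!: arg_cong[where f=card])



definition Dd :: "nat \<Rightarrow> nat \<Rightarrow> edge \<Rightarrow> (bool \<times> edge set) pmf" where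
  "Dd m k i = pair_pmf (bernoulli_pmf (xval m k i)) (rand_subset (edges m k) (xsub m k i))"

lemma per_edge:
  assumes k1: "1 \<le> k" and km: "2 * k < m" and e: "e \<in> edges m k" and e1: "e1 \<in> edges m k"
  shows "(\<Sum>i\<in>edges m k. measure_pmf.prob (Pi_pmf (edges m k) (False, {}) (Dd m k))
             {F. e \<in> hh (F i) \<and> (e1 \<in> (\<Union>j\<in>edges m k. hh (F j))) = b})
     \<le> (2 + 2*3) * measure_pmf.prob (Pi_pmf (edges m k) (False, {}) (Dd m k))
             {F. e \<in> (\<Union>j\<in>edges m k. hh (F j)) \<and> (e1 \<in> (\<Union>j\<in>edges m k. hh (F j))) = b}"
proof (rule abstract_main)
  let ?X = "edges m k"
  have fin: "finite ?X" by (rule fin_edges)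
  show "finite ?X" by (rule fin)
  define px where "px i = pmf (bernoulli_pmf (xval m k i)) True" for i
  have px: "0 \<le> px i" "px i \<le> 1" "px i \<le> xval m k i" for i
    unfolding px_def using bern_True_le xval_bounds[OF k1 km] by (auto simp: pmf_le_1)
  define R where "R i = rand_subset ?X (xsub m k i)" for i
  have Dd_eq: "Dd m k i = pair_pmf (bernoulli_pmf (xval m k i)) (R i)" for i unfolding Dd_def R_def ..
  show "measure_pmf.prob (Dd m k i) {y. e1 \<in> hh y} \<le> 1/2" if "i \<in> ?X" for i
  proof -
    have "measure_pmf.prob (Dd m k i) {y. e1 \<in> hh y} = px i * measure_pmf.prob (R i) {T. e1 \<in> T}"
      unfolding Dd_eq px_def using D_prob[where Q="\<lambda>T. e1 \<in> T"] by simp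
    also have "\<dots> \<le> px i * 1" using px by (intro mult_left_mono) auto
    also have "\<dots> \<le> 1/2" using px(3)[of i] xval_bounds(3)[OF k1 km, of i] by simp
    finally show ?thesis .
  qed
  show "measure_pmf.prob (Dd m k i) {y. e \<notin> hh y} * measure_pmf.prob (Dd m k i) {y. e1 \<notin> hh y}
                 \<le> measure_pmf.prob (Dd m k i) {y. e \<notin> hh y \<and> e1 \<notin> hh y}" if "i \<in> ?X" for i
  proof -
    define u where "u = measure_pmf.prob (R i) {T. e \<notin> T}"
    define v where "v = measure_pmf.prob (R i) {T. e1 \<notin> T}"
    define w where "w = measure_pmf.prob (R i) {T. e \<notin> T \<and> e1 \<notin> T}"
    have uvw: "u * v \<le> w" unfolding u_def v_def w_def R_def by (rule rs_corr[OF fin e e1])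
    have u1: "0 \<le> u" "u \<le> 1" "0 \<le> v" "v \<le> 1" unfolding u_def v_def by auto
    have b: "measure_pmf.prob (Dd m k i) {y. e \<notin> hh y} = px i * u + (1 - px i)"
      unfolding Dd_eq px_def u_def using D_prob[where Q="\<lambda>T. e \<notin> T"] by simp
    have a: "measure_pmf.prob (Dd m k i) {y. e1 \<notin> hh y} = px i * v + (1 - px i)"
      unfolding Dd_eq px_def v_def using D_prob[where Q="\<lambda>T. e1 \<notin> T"] by simp
    have al: "measure_pmf.prob (Dd m k i) {y. e \<notin> hh y \<and> e1 \<notin> hh y} = px i * w + (1 - px i)"
      unfolding Dd_eq px_def w_def using D_prob[where Q="\<lambda>T. e \<notin> T \<and> e1 \<notin> T"] by simp
    have id: "(px i * w + (1 - px i)) - (px i * u + (1 - px i)) * (px i * v + (1 - px i))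
        = px i * (w - u * v) + px i * (1 - px i) * ((1 - u) * (1 - v))"
      by (simp add: algebra_simps)
    have "0 \<le> px i * (w - u * v)" using px uvw by simp
    moreover have "0 \<le> px i * (1 - px i) * ((1 - u) * (1 - v))" using px u1 by simp
    ultimately show ?thesis unfolding a b al using id by linarith
  qed
  show "(\<Sum>i\<in>?X. measure_pmf.prob (Dd m k i) {y. e \<in> hh y}) \<le> 3"
  proof -
    have "(\<Sum>i\<in>?X. measure_pmf.prob (Dd m k i) {y. e \<in> hh y}) \<le> (\<Sum>i\<in>?X. xval m k i * xsub m k i e)"
    proof (rule sum_mono)
      fix i assume "i \<in> ?X"
      have "measure_pmf.prob (Dd m k i) {y. e \<in> hh y} = px i * pmf (bernoulli_pmf (xsub m k i e)) True"
        unfolding Dd_eq px_def R_def using D_prob[where Q="\<lambda>T. e \<in> T"] rs_in[OF fin e] by simp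
      also have "\<dots> \<le> xval m k i * xsub m k i e"
        using px bern_True_le[OF xsub_nonneg] xval_bounds(1)[OF k1 km, of i] by (intro mult_mono) auto
      finally show "measure_pmf.prob (Dd m k i) {y. e \<in> hh y} \<le> xval m k i * xsub m k i e" .
    qed
    also have "\<dots> \<le> 3" by (rule mu_bound[OF k1 km e])
    finally show ?thesis .
  qed
qed



lemma card_filter_ind: "finite X \<Longrightarrow> real (card {i\<in>X. P i}) = (\<Sum>i\<in>X. if P i then 1 else 0)"
proof -
  assume f: "finite X"
  have "{i\<in>X. P i} = X \<inter> Collect P" by auto
  then show ?thesis using card_ind[OF f, of "Collect P"] by simp
qed

lemma main_fixed:
  assumes k1: "1 \<le> k" and km: "2 * k < m" and e1: "e1 \<in> edges m k"
    and pos: "measure_pmf.prob (shadow m k) {\<omega>. (e1 \<in> setA \<omega>) = b} > 0"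
  shows "1/8 * measure_pmf.expectation (cond_pmf (shadow m k) {\<omega>. (e1 \<in> setA \<omega>) = b})
             (\<lambda>\<omega>. \<Sum>e\<in>outE m k v. real (multA' \<omega> e))
       \<le> measure_pmf.expectation (cond_pmf (shadow m k) {\<omega>. (e1 \<in> setA \<omega>) = b})
             (\<lambda>\<omega>. real (card (outE m k v \<inter> setA \<omega>)))"
proof -
  define X where "X = edges m k"
  define Os where "Os = outE m k v"
  define Q where "Q = Pi_pmf X (False, {}) (Dd m k)"
  define E where "E = {\<omega>. (e1 \<in> setA \<omega>) = b}"
  define E' where "E' = {F. (e1 \<in> (\<Union>j\<in>X. hh (F j))) = b}"
  have finX: "finite X" unfolding X_def by (rule fin_edges)
  have OsX: "Os \<subseteq> X" unfolding Os_def X_def outE_def by auto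
  have finO: "finite Os" using OsX finX finite_subset by blast
  have rep: "shadow m k = map_pmf (Psi X) Q"
    unfolding Q_def X_def Dd_def by (rule shadow_rep)
  have E'eq: "Psi X -` E = E'" unfolding E_def E'_def by (auto simp: setA_Psi)
  have PE: "0 < measure_pmf.prob Q E'" using pos unfolding rep E_def[symmetric] by (simp add: E'eq)
  have ne: "set_pmf Q \<inter> E' \<noteq> {}" using PE measure_pmf_zero_iff[of Q E'] by auto
  have cond: "cond_pmf (shadow m k) E = map_pmf (Psi X) (cond_pmf Q E')"
    unfolding rep using cond_map_pmf[of Q "Psi X" E] ne E'eq by simp
  define S1 where "S1 = (\<Sum>e\<in>Os. measure_pmf.prob Q (E' \<inter> {F. e \<in> (\<Union>j\<in>X. hh (F j))}))"
  define S2 where "S2 = (\<Sum>e\<in>Os. \<Sum>i\<in>X. measure_pmf.prob Q (E' \<inter> {F. e \<in> hh (F i)}))"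
  have L: "measure_pmf.expectation (cond_pmf (shadow m k) E) (\<lambda>\<omega>. real (card (Os \<inter> setA \<omega>))) = S1 / measure_pmf.prob Q E'"
  proof -
    have "measure_pmf.expectation (cond_pmf (shadow m k) E) (\<lambda>\<omega>. real (card (Os \<inter> setA \<omega>)))
        = measure_pmf.expectation (cond_pmf Q E') (\<lambda>F. \<Sum>e\<in>Os. indicator {F. e \<in> (\<Union>j\<in>X. hh (F j))} F)"
      unfolding cond by (simp add: setA_Psi card_ind[OF finO] indicator_def of_bool_def)
    also have "\<dots> = (\<Sum>e\<in>Os. measure_pmf.prob (cond_pmf Q E') {F. e \<in> (\<Union>j\<in>X. hh (F j))})"
      by (rule exp_ind_sum[OF finO])
    also have "\<dots> = S1 / measure_pmf.prob Q E'"
      unfolding S1_def cond_measure[OF ne] by (simp add: sum_divide_distrib)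
    finally show ?thesis .
  qed
  have R: "measure_pmf.expectation (cond_pmf (shadow m k) E) (\<lambda>\<omega>. \<Sum>e\<in>Os. real (multA' \<omega> e)) = S2 / measure_pmf.prob Q E'"
  proof -
    have "measure_pmf.expectation (cond_pmf (shadow m k) E) (\<lambda>\<omega>. \<Sum>e\<in>Os. real (multA' \<omega> e))
        = measure_pmf.expectation (cond_pmf Q E') (\<lambda>F. \<Sum>p\<in>Os \<times> X. indicator {F. fst p \<in> hh (F (snd p))} F)"
      unfolding cond
      apply (simp add: multA_Psi card_filter_ind[OF finX] indicator_def of_bool_def)
      apply (simp add: sum.cartesian_product case_prod_unfold)
      done
    also have "\<dots> = (\<Sum>p\<in>Os \<times> X. measure_pmf.prob (cond_pmf Q E') {F. fst p \<in> hh (F (snd p))})"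
      by (rule exp_ind_sum) (use finO finX in simp)
    also have "\<dots> = S2 / measure_pmf.prob Q E'"
      unfolding S2_def cond_measure[OF ne]
      by (simp add: sum_divide_distrib sum.cartesian_product case_prod_unfold)
    finally show ?thesis .
  qed
  have S: "S2 \<le> 8 * S1"
  proof -
    have "S2 \<le> (\<Sum>e\<in>Os. 8 * measure_pmf.prob Q (E' \<inter> {F. e \<in> (\<Union>j\<in>X. hh (F j))}))"
      unfolding S2_def
    proof (rule sum_mono)
      fix e assume eO: "e \<in> Os"
      have eX: "e \<in> edges m k" using eO OsX X_def by auto
      have s1: "E' \<inter> {F. e \<in> hh (F i)} = {F. e \<in> hh (F i) \<and> (e1 \<in> (\<Union>j\<in>X. hh (F j))) = b}" for i
        unfolding E'_def by auto
      have s2: "E' \<inter> {F. e \<in> (\<Union>j\<in>X. hh (F j))} = {F. e \<in> (\<Union>j\<in>X. hh (F j)) \<and> (e1 \<in> (\<Union>j\<in>X. hh (F j))) = b}"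
        unfolding E'_def by auto
      show "(\<Sum>i\<in>X. measure_pmf.prob Q (E' \<inter> {F. e \<in> hh (F i)})) \<le> 8 * measure_pmf.prob Q (E' \<inter> {F. e \<in> (\<Union>j\<in>X. hh (F j))})"
      proof -
        have pe: "(\<Sum>i\<in>X. measure_pmf.prob Q {F. e \<in> hh (F i) \<and> (e1 \<in> (\<Union>j\<in>X. hh (F j))) = b})
           \<le> (2 + 2*3) * measure_pmf.prob Q {F. e \<in> (\<Union>j\<in>X. hh (F j)) \<and> (e1 \<in> (\<Union>j\<in>X. hh (F j))) = b}"
          unfolding Q_def X_def by (rule per_edge[OF k1 km eX e1])
        show ?thesis unfolding s1 s2 using pe by simp
      qed
    qed
    then show ?thesis unfolding S1_def by (simp add: sum_distrib_left)
  qed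
  have "1/8 * (S2 / measure_pmf.prob Q E') \<le> S1 / measure_pmf.prob Q E'"
    using S PE by (simp add: divide_simps)
  then show ?thesis using L R unfolding Os_def E_def by simp
qed

theorem lemma6:
  "\<exists>\<rho>0::real. \<rho>0 > 0 \<and>
    (\<forall>\<rho>::real. 0 < \<rho> \<and> \<rho> < \<rho>0 \<longrightarrow>
      (\<exists>c::real. c > 0 \<and> (\<exists>M::nat. \<forall>m k e1 v b.
         m \<ge> M \<and> real k = \<rho> * real m \<and> e1 \<in> edges m k \<and> v \<in> verts m k \<and>
         measure_pmf.prob (shadow m k) {\<omega>. (e1 \<in> setA \<omega>) = b} > 0 \<longrightarrow>
         measure_pmf.expectation (cond_pmf (shadow m k) {\<omega>. (e1 \<in> setA \<omega>) = b})
             (\<lambda>\<omega>. real (card (outE m k v \<inter> setA \<omega>)))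
         \<ge> c / real m ^ 4 *
           measure_pmf.expectation (cond_pmf (shadow m k) {\<omega>. (e1 \<in> setA \<omega>) = b})
             (\<lambda>\<omega>. \<Sum>e\<in>outE m k v. real (multA' \<omega> e)))))"
proof -
  have "\<forall>\<rho>::real. 0 < \<rho> \<and> \<rho> < 1/3 \<longrightarrow>
      (\<exists>c::real. c > 0 \<and> (\<exists>M::nat. \<forall>m k e1 v b.
         m \<ge> M \<and> real k = \<rho> * real m \<and> e1 \<in> edges m k \<and> v \<in> verts m k \<and>
         measure_pmf.prob (shadow m k) {\<omega>. (e1 \<in> setA \<omega>) = b} > 0 \<longrightarrow>
         measure_pmf.expectation (cond_pmf (shadow m k) {\<omega>. (e1 \<in> setA \<omega>) = b})
             (\<lambda>\<omega>. real (card (outE m k v \<inter> setA \<omega>)))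
         \<ge> c / real m ^ 4 *
           measure_pmf.expectation (cond_pmf (shadow m k) {\<omega>. (e1 \<in> setA \<omega>) = b})
             (\<lambda>\<omega>. \<Sum>e\<in>outE m k v. real (multA' \<omega> e))))"
  proof (intro allI impI)
    fix \<rho> :: real assume \<rho>: "0 < \<rho> \<and> \<rho> < 1/3"
    have "\<forall>m k e1 v b.
         m \<ge> 1 \<and> real k = \<rho> * real m \<and> e1 \<in> edges m k \<and> v \<in> verts m k \<and>
         measure_pmf.prob (shadow m k) {\<omega>. (e1 \<in> setA \<omega>) = b} > 0 \<longrightarrow>
         measure_pmf.expectation (cond_pmf (shadow m k) {\<omega>. (e1 \<in> setA \<omega>) = b})
             (\<lambda>\<omega>. real (card (outE m k v \<inter> setA \<omega>)))
         \<ge> (1/8) / real m ^ 4 *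
           measure_pmf.expectation (cond_pmf (shadow m k) {\<omega>. (e1 \<in> setA \<omega>) = b})
             (\<lambda>\<omega>. \<Sum>e\<in>outE m k v. real (multA' \<omega> e))"
    proof (intro allI impI)
      fix m k :: nat and e1 :: edge and v :: vtx and b :: bool
      assume H: "m \<ge> 1 \<and> real k = \<rho> * real m \<and> e1 \<in> edges m k \<and> v \<in> verts m k \<and>
         measure_pmf.prob (shadow m k) {\<omega>. (e1 \<in> setA \<omega>) = b} > 0"
      have m1: "1 \<le> real m" using H by simp
      have "0 < real k" using H \<rho> m1 by simp
      then have k1: "1 \<le> k" by simp
      have "real (2 * k) < real m" using H \<rho> m1 by simp
      then have km: "2 * k < m" by linarith
      define E2 where "E2 = measure_pmf.expectation (cond_pmf (shadow m k) {\<omega>. (e1 \<in> setA \<omega>) = b})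
             (\<lambda>\<omega>. \<Sum>e\<in>outE m k v. real (multA' \<omega> e))"
      have E20: "0 \<le> E2" unfolding E2_def by (rule Bochner_Integration.integral_nonneg) (simp add: sum_nonneg)
      have mf: "1/8 * E2 \<le> measure_pmf.expectation (cond_pmf (shadow m k) {\<omega>. (e1 \<in> setA \<omega>) = b})
             (\<lambda>\<omega>. real (card (outE m k v \<inter> setA \<omega>)))"
        unfolding E2_def using main_fixed[OF k1 km] H by blast
      have "1 \<le> real m ^ 4" using m1 by simp
      then have "(1/8) / real m ^ 4 \<le> 1/8" by (simp add: divide_le_eq)
      then have "(1/8) / real m ^ 4 * E2 \<le> 1/8 * E2" using E20 by (rule mult_right_mono)
      then show "(1/8) / real m ^ 4 * E2 \<le> measure_pmf.expectation (cond_pmf (shadow m k) {\<omega>. (e1 \<in> setA \<omega>) = b})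
             (\<lambda>\<omega>. real (card (outE m k v \<inter> setA \<omega>)))"
        using mf unfolding E2_def by linarith
    qed
    then show "\<exists>c::real. c > 0 \<and> (\<exists>M::nat. \<forall>m k e1 v b.
         m \<ge> M \<and> real k = \<rho> * real m \<and> e1 \<in> edges m k \<and> v \<in> verts m k \<and>
         measure_pmf.prob (shadow m k) {\<omega>. (e1 \<in> setA \<omega>) = b} > 0 \<longrightarrow>
         measure_pmf.expectation (cond_pmf (shadow m k) {\<omega>. (e1 \<in> setA \<omega>) = b})
             (\<lambda>\<omega>. real (card (outE m k v \<inter> setA \<omega>)))
         \<ge> c / real m ^ 4 *
           measure_pmf.expectation (cond_pmf (shadow m k) {\<omega>. (e1 \<in> setA \<omega>) = b})
             (\<lambda>\<omega>. \<Sum>e\<in>outE m k v. real (multA' \<omega> e)))"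
      by (intro exI[of _ "1/8::real"] conjI exI[of _ "1::nat"]) auto
  qed
  then show ?thesis by (intro exI[of _ "1/3::real"]) auto
qed


end
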